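(* Let $d=2^N$ and let $\boldsymbol\theta\mapsto U(\boldsymbol\theta)$ be a smooth map from $\mathbb{R}^{N_p}$ to the $d\times d$ unitaries such that $\partial U/\partial\theta_a=-iU(\boldsymbol\theta)\mu_a(\boldsymbol\theta)$ with each $\mu_a(\boldsymbol\theta)$ Hermitian and smooth in $\boldsymbol\theta$. Let $W$ be a fixed unitary and $\mathcal{L}_E(\boldsymbol\theta)=\|U(\boldsymbol\theta)-W\|_F^2$. Assume local surjectivity holds at every point (so in particular $N_p\ge d^2$), i.e. for every $\boldsymbol\theta$ the set $\{\mu_a(\boldsymbol\theta)\}_a$ spans the real space of $d\times d$ Hermitian matrices. Let $\boldsymbol\theta^*$ be a critical point of $\mathcal{L}_E$ and $\chi=U(\boldsymbol\theta^* )^\dagger W$ (which is then a Hermitian unitary). Then: if $U(\boldsymbol\theta^* )=W$ (i.e. $\chi=\mathbb{1}$), the Hessian at $\boldsymbol\theta^*$ is positive semidefinite and $\boldsymbol\theta^*$ is a global minimum ($\mathcal{L}_E=0$); if $U(\boldsymbol\theta^* )=-W$ (i.e. $\chi=-\mathbb{1}$), the Hessian is negative semidefinite and $\boldsymbol\theta^*$ is a global maximum; and in every other case ($\chi$ has both eigenvalues $+1$ and $-1$) the Hessian has at least one strictly positive and one strictly negative eigenvalue, so $\boldsymbol\theta^*$ is a saddle point. Consequently, $\mathcal{L}_E$ has no local minima other than global minima (its landscape is trap-free).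
   Context: $\|A\|_F^2=\mathrm{Tr}(A^\dagger A)$ is the Frobenius norm. The $\mu_a$ are the dynamical-derivative generators of an analog ansatz, $\mu_a=\int_0^T g_a(t)U(t,0)^\dagger h_aU(t,0)\,dt$; local surjectivity is the condition that these generators span all Hermitian matrices. *)

theory Defs
  imports "HOL-Analysis.Analysis"
begin

definition adj :: "complex^'n^'m \<Rightarrow> complex^'m^'n" where
  "adj A = (\<chi> i j. cnj (A $ j $ i))"

definition hermitian :: "complex^'n^'n \<Rightarrow> bool" where
  "hermitian A \<longleftrightarrow> adj A = A"

definition unitary :: "complex^'n^'n \<Rightarrow> bool" where
  "unitary A \<longleftrightarrow> adj A ** A = mat 1 \<and> A ** adj A = mat 1"

definition cscale :: "complex \<Rightarrow> complex^'n^'m \<Rightarrow> complex^'n^'m" where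
  "cscale c A = (\<chi> i j. c * A $ i $ j)"

definition frob_sq :: "complex^'n^'n \<Rightarrow> real" where
  "frob_sq A = Re (trace (adj A ** A))"

definition is_eigenvalue :: "'a::field^'n^'n \<Rightarrow> 'a \<Rightarrow> bool" where
  "is_eigenvalue M l \<longleftrightarrow> (\<exists>v. v \<noteq> 0 \<and> M *v v = l *s v)"

definition has_partial ::
  "(real^'p \<Rightarrow> 'b::real_normed_vector) \<Rightarrow> 'p \<Rightarrow> real^'p \<Rightarrow> 'b \<Rightarrow> bool" where
  "has_partial f a x D \<longleftrightarrow> ((\<lambda>t. f (x + t *\<^sub>R axis a 1)) has_vector_derivative D) (at 0)"

definition pderiv ::
  "(real^'p \<Rightarrow> 'b::real_normed_vector) \<Rightarrow> 'p \<Rightarrow> real^'p \<Rightarrow> 'b" where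
  "pderiv f a x = vector_derivative (\<lambda>t. f (x + t *\<^sub>R axis a 1)) (at 0)"

fun Ck :: "nat \<Rightarrow> (real^'p \<Rightarrow> 'b::real_normed_vector) \<Rightarrow> bool" where
  "Ck 0 f = continuous_on UNIV f"
| "Ck (Suc k) f = (continuous_on UNIV f \<and>
      (\<forall>a. \<exists>g. (\<forall>x. has_partial f a x (g x)) \<and> Ck k g))"

definition smooth :: "(real^'p \<Rightarrow> 'b::real_normed_vector) \<Rightarrow> bool" where
  "smooth f \<longleftrightarrow> (\<forall>k. Ck k f)"

definition critical_point :: "(real^'p \<Rightarrow> real) \<Rightarrow> real^'p \<Rightarrow> bool" where
  "critical_point f x \<longleftrightarrow> (\<forall>a. has_partial f a x 0)"

definition hessian :: "(real^'p \<Rightarrow> real) \<Rightarrow> real^'p \<Rightarrow> real^'p^'p" where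
  "hessian f x = (\<chi> a b. pderiv (\<lambda>y. pderiv f b y) a x)"

definition pos_semidef :: "real^'p^'p \<Rightarrow> bool" where
  "pos_semidef H \<longleftrightarrow> (\<forall>v. v \<bullet> (H *v v) \<ge> 0)"

definition neg_semidef :: "real^'p^'p \<Rightarrow> bool" where
  "neg_semidef H \<longleftrightarrow> (\<forall>v. v \<bullet> (H *v v) \<le> 0)"

definition local_min :: "(real^'p \<Rightarrow> real) \<Rightarrow> real^'p \<Rightarrow> bool" where
  "local_min f x \<longleftrightarrow> (\<exists>e>0. \<forall>y. dist y x < e \<longrightarrow> f x \<le> f y)"

definition local_max :: "(real^'p \<Rightarrow> real) \<Rightarrow> real^'p \<Rightarrow> bool" where
  "local_max f x \<longleftrightarrow> (\<exists>e>0. \<forall>y. dist y x < e \<longrightarrow> f y \<le> f x)"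

definition saddle_point :: "(real^'p \<Rightarrow> real) \<Rightarrow> real^'p \<Rightarrow> bool" where
  "saddle_point f x \<longleftrightarrow> critical_point f x \<and> \<not> local_min f x \<and> \<not> local_max f x"

end

theory Submission
  imports Defs
begin


lemma adj_adj[simp]: "adj (adj A) = A"
  by (simp add: adj_def vec_eq_iff)

lemma adj_mult: "adj (A ** B) = adj B ** adj A"
  by (simp add: adj_def vec_eq_iff matrix_matrix_mult_def cnj_sum mult.commute)

lemma adj_add: "adj (A + B) = adj A + adj B"
  by (simp add: adj_def vec_eq_iff)

lemma adj_diff: "adj (A - B) = adj A - adj B"
  by (simp add: adj_def vec_eq_iff)

lemma adj_uminus: "adj (- A) = - adj A"
  by (simp add: adj_def vec_eq_iff)

lemma adj_scaleR: "adj (r *\<^sub>R A) = r *\<^sub>R adj A"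
  by (simp add: adj_def vec_eq_iff)

lemma adj_cscale: "adj (cscale c A) = cscale (cnj c) (adj A)"
  by (simp add: adj_def cscale_def vec_eq_iff)

lemma adj_mat: "adj (mat (of_real r)) = mat (of_real r)"
  by (simp add: adj_def mat_def vec_eq_iff del: of_real_def)

lemma adj_mat1: "adj (mat 1) = mat 1"
  using adj_mat[of 1] by simp

lemma adj_sum: "finite S \<Longrightarrow> adj (sum f S) = sum (\<lambda>i. adj (f i)) S"
  by (induct S rule: finite_induct) (auto simp: adj_add adj_def vec_eq_iff)

lemma adj_zero[simp]: "adj 0 = 0"
  by (simp add: adj_def vec_eq_iff)

lemma cscale_mult_left: "cscale c A ** B = cscale c (A ** B)"
  by (simp add: cscale_def vec_eq_iff matrix_matrix_mult_def sum_distrib_left mult.assoc)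

lemma cscale_mult_right: "A ** cscale c B = cscale c (A ** B)"
  by (simp add: cscale_def vec_eq_iff matrix_matrix_mult_def sum_distrib_left mult.left_commute)

lemma scaleR_mult_left: "(r *\<^sub>R A) ** (B::complex^'n^'m) = r *\<^sub>R (A ** B)"
  by (simp add: vec_eq_iff matrix_matrix_mult_def scaleR_sum_right)

lemma scaleR_mult_right: "(A::complex^'n^'m) ** (r *\<^sub>R B) = r *\<^sub>R (A ** B)"
  by (simp add: vec_eq_iff matrix_matrix_mult_def scaleR_sum_right)

lemma trace_adj: "trace (adj A) = cnj (trace A)"
  by (simp add: trace_def adj_def cnj_sum)

lemma trace_cscale: "trace (cscale c A) = c * trace A"
  by (simp add: trace_def cscale_def sum_distrib_left)

lemma trace_scaleR: "trace (r *\<^sub>R (A::complex^'n^'n)) = r *\<^sub>R trace A"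
  by (simp add: trace_def scaleR_sum_right)

lemma trace_sum: "finite S \<Longrightarrow> trace (sum (f::_\<Rightarrow>complex^'n^'n) S) = sum (\<lambda>i. trace (f i)) S"
  by (induct S rule: finite_induct) (auto simp: trace_add trace_0[unfolded mat_0])

lemma cscale_add: "cscale c (A + B) = cscale c A + cscale c B"
  by (simp add: cscale_def vec_eq_iff algebra_simps)

lemma cscale_scaleR: "cscale c (r *\<^sub>R A) = r *\<^sub>R cscale c A"
  by (simp add: cscale_def vec_eq_iff)

lemma linear_cscale: "linear (cscale c)"
  by (rule linearI) (auto simp: cscale_add cscale_scaleR)

lemma linear_adj: "linear adj"
  by (rule linearI) (auto simp: adj_add adj_scaleR)

lemma linear_trace: "linear (trace :: complex^'n^'n \<Rightarrow> complex)"
  by (rule linearI) (auto simp: trace_add trace_scaleR)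

lemma bounded_linear_cscale: "bounded_linear (cscale c :: complex^'n^'m \<Rightarrow> _)"
  by (rule linear_conv_bounded_linear[THEN iffD1, OF linear_cscale])

lemma bounded_linear_adj: "bounded_linear (adj :: complex^'n^'m \<Rightarrow> _)"
  by (rule linear_conv_bounded_linear[THEN iffD1, OF linear_adj])

lemma bounded_linear_trace: "bounded_linear (trace :: complex^'n^'n \<Rightarrow> complex)"
  by (rule linear_conv_bounded_linear[THEN iffD1, OF linear_trace])

lemma mm_add_rdistrib: "((A::'a::comm_ring_1^'n^'m) + B) ** C = A ** C + B ** C"
  by (simp add: vec_eq_iff matrix_matrix_mult_def distrib_right sum.distrib)

lemma mm_sub_rdistrib: "((A::'a::comm_ring_1^'n^'m) - B) ** C = A ** C - B ** C"
  by (simp add: vec_eq_iff matrix_matrix_mult_def left_diff_distrib sum_subtractf)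

lemma mm_sub_ldistrib: "(A::'a::comm_ring_1^'n^'m) ** (B - C) = A ** B - A ** C"
  by (simp add: vec_eq_iff matrix_matrix_mult_def right_diff_distrib sum_subtractf)

lemma bilinear_mmult: "bilinear ((**) :: complex^'n^'m \<Rightarrow> complex^'k^'n \<Rightarrow> _)"
  unfolding bilinear_def
  by (auto intro!: linearI simp: matrix_add_ldistrib mm_add_rdistrib scaleR_mult_left scaleR_mult_right)

lemma bounded_bilinear_mmult: "bounded_bilinear ((**) :: complex^'n^'m \<Rightarrow> complex^'k^'n \<Rightarrow> _)"
  by (rule bilinear_conv_bounded_bilinear[THEN iffD1, OF bilinear_mmult])

lemma unitary_mult: "unitary A \<Longrightarrow> unitary B \<Longrightarrow> unitary (A ** B)"
  unfolding unitary_def adj_mult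
  by (metis matrix_mul_assoc matrix_mul_lid)

lemma unitary_adj: "unitary A \<Longrightarrow> unitary (adj A)"
  unfolding unitary_def by simp

lemma unitary_uminus: "unitary A \<Longrightarrow> unitary (- A)"
  unfolding unitary_def adj_uminus
  by (simp add: matrix_vector_mult_def vec_eq_iff matrix_matrix_mult_def sum_negf)

lemma trace_adj_self_ge: "Re (trace (adj A ** A)) = (\<Sum>i\<in>UNIV. \<Sum>j\<in>UNIV. (cmod (A $ j $ i))^2)"
  by (simp add: trace_def adj_def matrix_matrix_mult_def Re_sum) (simp add: cmod_power2, simp add: power2_eq_square)

lemma frob_sq_nonneg: "frob_sq A \<ge> 0"
  unfolding frob_sq_def trace_adj_self_ge by (intro sum_nonneg) auto

lemma frob_sq_zero_iff: "frob_sq A = 0 \<longleftrightarrow> A = 0"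
proof
  assume "frob_sq A = 0"
  then have "\<forall>i\<in>UNIV. (\<Sum>j\<in>UNIV. (cmod (A $ j $ i))^2) = 0"
    unfolding frob_sq_def trace_adj_self_ge
    by (subst sum_nonneg_eq_0_iff[symmetric]) (auto intro: sum_nonneg)
  then have "\<forall>i j. (cmod (A $ j $ i))^2 = 0"
    by (subst (asm) sum_nonneg_eq_0_iff) auto
  then show "A = 0" by (simp add: vec_eq_iff)
qed (simp add: frob_sq_def trace_def matrix_matrix_mult_def)

lemma trace_mat1: "trace (mat 1 :: complex^'n^'n) = of_nat CARD('n)"
  by (rule trace_I)

lemma frob_sq_diff:
  assumes "unitary A" "unitary B"
  shows "frob_sq (A - B) = 2 * CARD('n) - 2 * Re (trace (adj A ** B :: complex^'n^'n))"
proof -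
  have "adj (A - B) ** (A - B) = adj A ** A - adj A ** B - (adj B ** A - adj B ** B)"
    by (simp add: adj_diff mm_sub_ldistrib mm_sub_rdistrib)
  also have "\<dots> = mat 1 - adj A ** B - adj B ** A + mat 1"
    using assms by (simp add: unitary_def)
  finally have e: "adj (A - B) ** (A - B) = mat 1 - adj A ** B - adj B ** A + mat 1" .
  have t: "trace (adj B ** A) = cnj (trace (adj A ** B))"
    by (metis adj_adj adj_mult trace_adj)
  have "trace (mat 1 - adj A ** B - adj B ** A + mat 1) = 2 * of_nat CARD('n) - trace (adj A ** B) - cnj (trace (adj A ** B))"
    by (simp only: trace_add trace_sub trace_mat1 t) simp
  then show ?thesis unfolding frob_sq_def e by simp
qed


lemma bl_adjW: "bounded_linear (\<lambda>A::complex^'n^'n. adj A ** (W::complex^'n^'n))"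
proof -
  have "bounded_linear (\<lambda>A::complex^'n^'n. A ** W)"
    by (rule bounded_bilinear.bounded_linear_left[OF bounded_bilinear_mmult])
  then show ?thesis
    using bounded_linear_compose[OF _ bounded_linear_adj] by (auto simp: o_def)
qed

lemma bl_T: "bounded_linear (\<lambda>A::complex^'n^'n. trace (adj A ** (W::complex^'n^'n)))"
proof -
  have "bounded_linear (\<lambda>A::complex^'n^'n. A ** W)"
    by (rule bounded_bilinear.bounded_linear_left[OF bounded_bilinear_mmult])
  then have "bounded_linear (\<lambda>A::complex^'n^'n. adj A ** W)"
    using bounded_linear_compose[OF _ bounded_linear_adj] by (auto simp: o_def)
  then show ?thesis
    using bounded_linear_compose[OF bounded_linear_trace] by (auto simp: o_def)
qed

lemma trace_herm3:
  assumes "hermitian A" "hermitian B" "hermitian X"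
  shows "Re (trace (A ** (B ** X))) = Re (trace (B ** (A ** X)))"
proof -
  have "trace (adj (A ** (B ** X))) = trace ((X ** B) ** A)"
    using assms by (simp add: adj_mult hermitian_def)
  also have "\<dots> = trace (A ** (X ** B))" by (rule trace_mul_sym)
  also have "\<dots> = trace ((A ** X) ** B)" by (simp add: matrix_mul_assoc)
  also have "\<dots> = trace (B ** (A ** X))" by (rule trace_mul_sym)
  finally have "Re (cnj (trace (A ** (B ** X)))) = Re (trace (B ** (A ** X)))" by (simp add: trace_adj)
  then show ?thesis by simp
qed

lemma hermitian_sum: "finite S \<Longrightarrow> (\<And>i. i \<in> S \<Longrightarrow> hermitian (f i)) \<Longrightarrow> hermitian (sum f S)"
  by (simp add: hermitian_def adj_sum)

lemma hermitian_scaleR: "hermitian A \<Longrightarrow> hermitian (r *\<^sub>R A)"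
  by (simp add: hermitian_def adj_scaleR)

lemma trace_herm_real:
  assumes "hermitian A" "hermitian B"
  shows "Im (trace (A ** B)) = 0"
proof -
  have "trace (adj (A ** B)) = trace (B ** A)"
    using assms by (simp add: adj_mult hermitian_def)
  then have "cnj (trace (A ** B)) = trace (A ** B)"
    by (simp add: trace_adj trace_mul_sym[of B A])
  then show ?thesis by (metis cnj.sel(2) equation_minus_iff neg_equal_zero)
qed


definition projS :: "'p set \<Rightarrow> real^'p \<Rightarrow> real^'p" where
  "projS S h = (\<chi> a. if a \<in> S then h $ a else 0)"

lemma norm_le_comp:
  fixes y z :: "real^'p"
  assumes "\<And>i. \<bar>y $ i\<bar> \<le> \<bar>z $ i\<bar>"
  shows "norm y \<le> norm z"
  unfolding norm_vec_def by (rule L2_set_mono) (use assms in auto)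

lemma vd_lin: "((\<lambda>t'::real. t' *\<^sub>R (c::'a::real_normed_vector)) has_vector_derivative c) (at t within S)"
proof -
  have "((\<lambda>t'::real. t' *\<^sub>R c) has_vector_derivative (t *\<^sub>R 0 + 1 *\<^sub>R c)) (at t within S)"
    by (rule has_vector_derivative_scaleR) (auto intro: DERIV_ident has_vector_derivative_const)
  then show ?thesis by simp
qed

lemma shift_vd:
  fixes p q w :: "'a::real_normed_vector" and f :: "'a \<Rightarrow> 'b::real_normed_vector"
  assumes "((\<lambda>u. f (q + u *\<^sub>R w)) has_vector_derivative G) (at 0)"
    and that: "q = p + t *\<^sub>R w"
  shows "((\<lambda>t'. f (p + t' *\<^sub>R w)) has_vector_derivative G) (at t)"
proof -
  have d1: "((\<lambda>t'. t' - t) has_vector_derivative 1) (at t)"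
    by (auto intro!: derivative_eq_intros)
  have "((\<lambda>u. f (q + u *\<^sub>R w)) \<circ> (\<lambda>t'. t' - t) has_vector_derivative 1 *\<^sub>R G) (at t)"
    by (rule vector_diff_chain_at[OF d1]) (use assms in simp)
  moreover have e: "t *\<^sub>R w + (x - t) *\<^sub>R w = x *\<^sub>R w" for x
    by (simp add: algebra_simps)
  have "(\<lambda>u. f (q + u *\<^sub>R w)) \<circ> (\<lambda>t'. t' - t) = (\<lambda>t'. f (p + t' *\<^sub>R w))"
    using that by (simp add: o_def add.assoc e)
  ultimately show ?thesis by simp
qed

lemma partials_fderiv:
  fixes f :: "real^'p \<Rightarrow> 'b::real_normed_vector"
  assumes part: "\<And>a y. has_partial f a y (g a y)"
   and cont: "\<And>a. continuous_on UNIV (g a)"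
  shows "(f has_derivative (\<lambda>h. \<Sum>a\<in>UNIV. h$a *\<^sub>R g a x)) (at x)"
proof -
  have key: "\<forall>e>0. \<exists>d>0. \<forall>h. norm h < d \<longrightarrow>
      norm (f (x + projS S h) - f x - (\<Sum>a\<in>S. h$a *\<^sub>R g a x)) \<le> e * norm h"
    if "finite S" for S
    using that
  proof (induct S rule: finite_induct)
    case empty
    have z: "projS {} h = 0" for h by (simp add: projS_def vec_eq_iff)
    show ?case by (auto intro!: exI[of _ 1] simp: z)
  next
    case (insert b S)
    show ?case
    proof (intro allI impI)
      fix e :: real assume e: "e > 0"
      from insert(3) e obtain d1 where d1: "d1 > 0" and
        D1: "\<And>h. norm h < d1 \<Longrightarrow> norm (f (x + projS S h) - f x - (\<Sum>a\<in>S. h$a *\<^sub>R g a x)) \<le> e/2 * norm h"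
        by (meson half_gt_zero)
      have "isCont (g b) x" using cont[of b] by (simp add: continuous_on_eq_continuous_at)
      then obtain d2 where d2: "d2 > 0" and D2: "\<And>y. dist y x < d2 \<Longrightarrow> dist (g b y) (g b x) < e/2"
        using e unfolding continuous_at_eps_delta by (meson half_gt_zero)
      show "\<exists>d>0. \<forall>h. norm h < d \<longrightarrow>
         norm (f (x + projS (insert b S) h) - f x - (\<Sum>a\<in>insert b S. h$a *\<^sub>R g a x)) \<le> e * norm h"
      proof (intro exI[of _ "min d1 d2"] conjI allI impI)
        show "min d1 d2 > 0" using d1 d2 by simp
        fix h :: "real^'p" assume h: "norm h < min d1 d2"
        define p where "p = x + projS S h"
        define s where "s = h $ b"
        define w where "w = (axis b 1 :: real^'p)"
        define \<phi> where "\<phi> t = f (p + t *\<^sub>R w) - t *\<^sub>R g b x" for t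
        have seg: "\<bar>t\<bar> \<le> \<bar>s\<bar>" if "t \<in> closed_segment 0 s" for t
          using that by (auto simp: closed_segment_eq_real_ivl split: if_splits)
        have near: "dist (p + t *\<^sub>R w) x < d2" if "\<bar>t\<bar> \<le> \<bar>s\<bar>" for t
        proof -
          have "norm (projS S h + t *\<^sub>R w) \<le> norm h"
          proof (rule norm_le_comp)
            fix i
            show "\<bar>(projS S h + t *\<^sub>R w) $ i\<bar> \<le> \<bar>h $ i\<bar>"
            proof (cases "i = b")
              case True
              then show ?thesis using that insert(2) by (simp add: projS_def w_def s_def)
            next
              case False
              then show ?thesis by (simp add: projS_def w_def axis_def)
            qed
          qed
          then show ?thesis using h by (simp add: dist_norm p_def)
        qed
        have der: "(\<phi> has_derivative (\<lambda>i. i *\<^sub>R (g b (p + t *\<^sub>R w) - g b x))) (at t within closed_segment 0 s)" for t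
        proof -
          have "((\<lambda>t'. f (p + t' *\<^sub>R w)) has_vector_derivative g b (p + t *\<^sub>R w)) (at t)"
            by (rule shift_vd[where q="p + t *\<^sub>R w"]) (use part[of b "p + t *\<^sub>R w"] in \<open>auto simp: has_partial_def w_def\<close>)
          moreover have "((\<lambda>t'::real. t' *\<^sub>R g b x) has_vector_derivative g b x) (at t)"
            by (rule vd_lin)
          ultimately have "(\<phi> has_vector_derivative (g b (p + t *\<^sub>R w) - g b x)) (at t)"
            unfolding \<phi>_def by (rule has_vector_derivative_diff)
          then show ?thesis
            using has_derivative_at_withinI unfolding has_vector_derivative_def by blast
        qed
        have bnd: "onorm (\<lambda>i. i *\<^sub>R (g b (p + t *\<^sub>R w) - g b x)) \<le> e/2" if "t \<in> closed_segment 0 s" for t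
        proof -
          have "onorm (\<lambda>i::real. i *\<^sub>R (g b (p + t *\<^sub>R w) - g b x)) = norm (g b (p + t *\<^sub>R w) - g b x)"
            using onorm_scaleR_left[of "\<lambda>i::real. i"] by (simp add: onorm_id bounded_linear_ident[unfolded id_def])
          also have "\<dots> \<le> e/2" using D2[OF near[OF seg[OF that]]] by (simp add: dist_norm)
          finally show ?thesis .
        qed
        have "norm (\<phi> s - \<phi> 0) \<le> e/2 * norm (s - 0)"
          by (rule differentiable_bound[OF convex_closed_segment der bnd]) auto
        moreover have "\<phi> s - \<phi> 0 = f (p + s *\<^sub>R w) - f p - s *\<^sub>R g b x"
          by (simp add: \<phi>_def diff_right_commute)
        ultimately have A: "norm (f (p + s *\<^sub>R w) - f p - s *\<^sub>R g b x) \<le> e/2 * \<bar>s\<bar>"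
          by simp
        have B: "norm (f p - f x - (\<Sum>a\<in>S. h$a *\<^sub>R g a x)) \<le> e/2 * norm h"
          using D1 h p_def by auto
        have sh: "\<bar>s\<bar> \<le> norm h" unfolding s_def by (rule component_le_norm_cart)
        have eq1: "x + projS (insert b S) h = p + s *\<^sub>R w"
          using insert(2) by (auto simp: vec_eq_iff projS_def p_def s_def w_def axis_def)
        have eq2: "(\<Sum>a\<in>insert b S. h$a *\<^sub>R g a x) = s *\<^sub>R g b x + (\<Sum>a\<in>S. h$a *\<^sub>R g a x)"
          using insert(1,2) by (simp add: s_def)
        have "norm (f (x + projS (insert b S) h) - f x - (\<Sum>a\<in>insert b S. h$a *\<^sub>R g a x))
            = norm ((f (p + s *\<^sub>R w) - f p - s *\<^sub>R g b x) + (f p - f x - (\<Sum>a\<in>S. h$a *\<^sub>R g a x)))"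
          unfolding eq1 eq2 by (rule arg_cong[where f=norm]) (simp add: algebra_simps)
        also have "\<dots> \<le> e/2 * \<bar>s\<bar> + e/2 * norm h"
          by (rule order_trans[OF norm_triangle_ineq add_mono[OF A B]])
        also have "\<dots> \<le> e * norm h" using sh e by (simp add: field_simps)
        finally show "norm (f (x + projS (insert b S) h) - f x - (\<Sum>a\<in>insert b S. h$a *\<^sub>R g a x)) \<le> e * norm h" .
      qed
    qed
  qed
  have bl: "bounded_linear (\<lambda>h::real^'p. \<Sum>a\<in>UNIV. h$a *\<^sub>R g a x)"
    by (rule linear_conv_bounded_linear[THEN iffD1], rule linearI)
       (auto simp: sum.distrib scaleR_add_left scaleR_sum_right)
  have pU: "projS UNIV h = h" for h by (simp add: projS_def vec_eq_iff)
  show ?thesis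
    unfolding has_derivative_at_alt
  proof (intro conjI bl allI impI)
    fix e :: real assume "e > 0"
    then obtain d where "d > 0" and D: "\<And>h. norm h < d \<Longrightarrow>
      norm (f (x + h) - f x - (\<Sum>a\<in>UNIV. h$a *\<^sub>R g a x)) \<le> e * norm h"
      using key[of UNIV] by (auto simp: pU)
    show "\<exists>d>0. \<forall>y. norm (y - x) < d \<longrightarrow> norm (f y - f x - (\<Sum>a\<in>UNIV. (y - x)$a *\<^sub>R g a x)) \<le> e * norm (y - x)"
    proof (intro exI[of _ d] conjI allI impI)
      fix y assume "norm (y - x) < d"
      then show "norm (f y - f x - (\<Sum>a\<in>UNIV. (y - x)$a *\<^sub>R g a x)) \<le> e * norm (y - x)"
        using D[of "y - x"] by simp
    qed (rule \<open>d > 0\<close>)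
  qed
qed

lemma line_vd:
  assumes "(F has_derivative F') (at (\<theta> + t *\<^sub>R v))"
  shows "((\<lambda>s. F (\<theta> + s *\<^sub>R v)) has_vector_derivative F' v) (at t)"
proof -
  have l: "((\<lambda>s. \<theta> + s *\<^sub>R v) has_derivative (\<lambda>s. s *\<^sub>R v)) (at t)"
    by (auto intro!: derivative_eq_intros)
  have "((F \<circ> (\<lambda>s. \<theta> + s *\<^sub>R v)) has_derivative (F' \<circ> (\<lambda>s. s *\<^sub>R v))) (at t)"
    by (rule diff_chain_at[OF l]) (use assms in simp)
  moreover have "F' \<circ> (\<lambda>s. s *\<^sub>R v) = (\<lambda>s. s *\<^sub>R F' v)"
    using has_derivative_bounded_linear[OF assms] by (auto simp: o_def linear_simps)
  ultimately show ?thesis by (simp add: has_vector_derivative_def o_def)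
qed



lemma sym_inner:
  fixes H :: "real^'p^'p"
  assumes sym: "\<And>a b. H$a$b = H$b$a"
  shows "x \<bullet> (H *v y) = y \<bullet> (H *v x)"
proof -
  have "x \<bullet> (H *v y) = (\<Sum>a\<in>UNIV. \<Sum>b\<in>UNIV. x$a * H$a$b * y$b)"
    by (simp add: inner_vec_def matrix_vector_mult_def sum_distrib_left mult.assoc)
  also have "\<dots> = (\<Sum>b\<in>UNIV. \<Sum>a\<in>UNIV. x$a * H$a$b * y$b)" by (rule sum.swap)
  also have "\<dots> = y \<bullet> (H *v x)"
    by (simp add: inner_vec_def matrix_vector_mult_def sum_distrib_left sym mult_ac)
  finally show ?thesis .
qed

lemma quad_zero:
  fixes a c :: real
  assumes "a \<ge> 0" "\<And>t. 2 * t * a + t^2 * c \<le> 0"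
  shows "a = 0"
proof (rule ccontr)
  assume "a \<noteq> 0" then have a: "a > 0" using assms(1) by simp
  define k where "k = \<bar>c\<bar> + 1"
  have k: "k > 0" "\<bar>c\<bar> \<le> k" by (auto simp: k_def)
  define t where "t = a / k"
  have t: "t > 0" using a k by (simp add: t_def)
  have "t * k = a" using k by (simp add: t_def)
  have "t^2 * c \<ge> - (t^2 * k)"
    using k t by (metis abs_le_D2 minus_le_iff mult_le_cancel_left_pos mult_minus_right zero_less_power)
  also have "t^2 * k = t * a" using \<open>t * k = a\<close> by (simp add: power2_eq_square mult.assoc)
  finally have "2 * t * a + t^2 * c \<ge> t * a" by linarith
  moreover have "t * a > 0" using t a by simp
  moreover have "2 * t * a = 2 * (t * a)" by simp
  ultimately show False using assms(2)[of t] by linarith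
qed

lemma pos_eig:
  fixes H :: "real^'p^'p"
  assumes sym: "\<And>a b. H$a$b = H$b$a" and pos: "v \<bullet> (H *v v) > 0"
  shows "\<exists>l>0. is_eigenvalue H l"
proof -
  define q where "q u = u \<bullet> (H *v u)" for u
  have qs: "q (c *\<^sub>R u) = c^2 * q u" for c u
    by (simp add: q_def matrix_vector_mult_def inner_vec_def vec_eq_iff sum_distrib_left power2_eq_square mult_ac)
  have cont: "continuous_on (sphere 0 1) q"
    unfolding q_def
    by (intro continuous_intros linear_continuous_on matrix_vector_mul_bounded_linear)
  obtain v0 where v0: "v0 \<in> sphere 0 1" and mx: "\<And>y. y \<in> sphere 0 1 \<Longrightarrow> q y \<le> q v0"
  proof -
    have "axis undefined 1 \<in> sphere (0::real^'p) 1" by simp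
    then have "sphere (0::real^'p) 1 \<noteq> {}" by blast
    then show ?thesis using continuous_attains_sup[OF compact_sphere _ cont] that by blast
  qed
  define l where "l = q v0"
  have nv: "norm v0 = 1" using v0 by simp
  have v_ne: "v \<noteq> 0" using pos by auto
  have le: "q u \<le> l * (u \<bullet> u)" for u
  proof (cases "u = 0")
    case True then show ?thesis by (simp add: q_def)
  next
    case False
    then have "q ((1 / norm u) *\<^sub>R u) \<le> l" using mx[of "(1 / norm u) *\<^sub>R u"] by (simp add: l_def)
    then have "q u / (norm u)^2 \<le> l" unfolding qs by (simp add: power_divide)
    then show ?thesis using False by (simp add: divide_le_eq power2_norm_eq_inner mult.commute)
  qed
  have lpos: "l > 0"
  proof -
    have "0 < q v" using pos by (simp add: q_def)
    then have "0 < q v / (norm v)^2" using v_ne by simp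
    also have "q v / (norm v)^2 = q ((1 / norm v) *\<^sub>R v)" unfolding qs by (simp add: power_divide)
    also have "\<dots> \<le> l" using mx[of "(1 / norm v) *\<^sub>R v"] v_ne by (simp add: l_def)
    finally show ?thesis .
  qed
  define r where "r = H *v v0 - l *\<^sub>R v0"
  have vv: "v0 \<bullet> v0 = 1" using nv by (simp add: power2_norm_eq_inner[symmetric])
  define A where "A = r \<bullet> (H *v v0)"
  define B where "B = r \<bullet> v0"
  define C where "C = r \<bullet> r"
  have F4: "C = A - l * B" by (simp add: A_def B_def C_def r_def inner_diff_right)
  have "2 * t * C + t^2 * (q r - l * C) \<le> 0" for t
  proof -
    have F1: "q (v0 + t *\<^sub>R r) \<le> l * ((v0 + t *\<^sub>R r) \<bullet> (v0 + t *\<^sub>R r))" by (rule le)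
    have F2: "q (v0 + t *\<^sub>R r) = l + 2 * t * A + t^2 * q r"
      using sym_inner[OF sym, of v0 r] unfolding A_def
      by (simp add: q_def l_def matrix_vector_right_distrib inner_add_left inner_add_right
          matrix_vector_mult_scaleR power2_eq_square algebra_simps)
    have F3: "(v0 + t *\<^sub>R r) \<bullet> (v0 + t *\<^sub>R r) = 1 + 2 * t * B + t^2 * C"
      using vv unfolding B_def C_def
      by (simp add: inner_add_left inner_add_right power2_eq_square inner_commute algebra_simps)
    have F5: "l * (1 + 2 * t * B + t^2 * C) = l + 2 * t * (l * B) + t^2 * (l * C)"
      by (simp add: algebra_simps)
    have F6: "2 * t * C = 2 * t * A - 2 * t * (l * B)" unfolding F4 by (simp add: algebra_simps)
    have F7: "t^2 * (q r - l * C) = t^2 * q r - t^2 * (l * C)" by (simp add: algebra_simps)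
    have F1': "q (v0 + t *\<^sub>R r) \<le> l * (1 + 2 * t * B + t^2 * C)" using F1 F3 by simp
    show ?thesis using F1' F2 F5 F6 F7 by linarith
  qed
  then have "r \<bullet> r = 0" unfolding C_def by (intro quad_zero) auto
  then have "H *v v0 = l *s v0" by (simp add: r_def scalar_mult_eq_scaleR)
  moreover have "v0 \<noteq> 0" using nv by auto
  ultimately show ?thesis using lpos unfolding is_eigenvalue_def by blast
qed

lemma neg_eig:
  fixes H :: "real^'p^'p"
  assumes sym: "\<And>a b. H$a$b = H$b$a" and neg: "v \<bullet> (H *v v) < 0"
  shows "\<exists>l<0. is_eigenvalue H l"
proof -
  have "v \<bullet> ((- H) *v v) > 0" using neg
    by (simp add: matrix_vector_mult_def inner_vec_def sum_negf)
  then obtain l w where "l > 0" "w \<noteq> 0" "(- H) *v w = l *s w"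
    using pos_eig[of "- H" v] sym unfolding is_eigenvalue_def by auto
  moreover have "H *v w = - ((- H) *v w)"
    by (simp add: vec_eq_iff matrix_vector_mult_def sum_negf)
  ultimately have "H *v w = (- l) *s w"
    by (simp add: vec_eq_iff)
  then show ?thesis using \<open>l > 0\<close> \<open>w \<noteq> 0\<close> unfolding is_eigenvalue_def
    by (intro exI[of _ "- l"]) auto
qed

lemma incr_from_second:
  fixes f f' :: "real \<Rightarrow> real"
  assumes der: "\<And>t. (f has_real_derivative f' t) (at t)" and z: "f' 0 = 0"
    and d2: "(f' has_real_derivative c) (at 0)" and c: "c > 0" and d: "d > 0"
  shows "\<exists>t. 0 < t \<and> t < d \<and> f 0 < f t"
proof -
  obtain d1 where d1: "d1 > 0" and D1: "\<And>h. h > 0 \<Longrightarrow> h < d1 \<Longrightarrow> f' 0 < f' (0 + h)"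
    using DERIV_pos_inc_right[OF d2 c] by blast
  define t where "t = min d d1 / 2"
  have t: "0 < t" "t < d" "t < d1" using d d1 by (auto simp: t_def)
  obtain z where z1: "0 < z" "z < t" and eq: "f t - f 0 = (t - 0) * f' z"
    using MVT2[OF t(1), of f f'] der by blast
  have "f' z > 0" using D1[of z] z1 t z by simp
  then have "f t - f 0 > 0" using eq t by simp
  then show ?thesis using t by auto
qed

lemma span_coeffs:
  fixes f :: "'p::finite \<Rightarrow> 'b::real_vector"
  assumes "x \<in> span (range f)"
  shows "\<exists>v::real^'p. x = (\<Sum>a\<in>UNIV. v$a *\<^sub>R f a)"
proof -
  define P where "P x \<longleftrightarrow> (\<exists>v::real^'p. x = (\<Sum>a\<in>UNIV. v$a *\<^sub>R f a))" for x
  have "subspace (Collect P)"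
    unfolding subspace_def
  proof (intro conjI ballI allI)
    show "0 \<in> Collect P" unfolding P_def by (auto intro!: exI[of _ 0])
  next
    fix x y assume "x \<in> Collect P" "y \<in> Collect P"
    then obtain v1 v2 where "x = (\<Sum>a\<in>UNIV. v1$a *\<^sub>R f a)" "y = (\<Sum>a\<in>UNIV. v2$a *\<^sub>R f a)"
      unfolding P_def by auto
    then show "x + y \<in> Collect P" unfolding P_def
      by (auto intro!: exI[of _ "v1 + v2"] simp: sum.distrib scaleR_add_left)
  next
    fix c :: real and x assume "x \<in> Collect P"
    then obtain v1 where "x = (\<Sum>a\<in>UNIV. v1$a *\<^sub>R f a)" unfolding P_def by auto
    then show "c *\<^sub>R x \<in> Collect P" unfolding P_def
      by (auto intro!: exI[of _ "c *\<^sub>R v1"] simp: scaleR_sum_right)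
  qed
  moreover have "P x" if "x \<in> range f" for x
  proof -
    from that obtain a where "x = f a" by auto
    moreover have "f a = (\<Sum>b\<in>UNIV. (axis a 1 :: real^'p)$b *\<^sub>R f b)"
      by (simp add: axis_def if_distrib[of "\<lambda>r. r *\<^sub>R _"] cong: if_cong)
    ultimately show ?thesis unfolding P_def by blast
  qed
  ultimately have "P x" using span_induct[OF assms] by blast
  then show ?thesis unfolding P_def .
qed


lemma mat1_mv: "mat 1 *v x = (x::'a::comm_ring_1^'n)"
  by (rule matrix_vector_mul_lid)

lemma neg_mat1_mv: "(- mat 1) *v x = - (x::'a::comm_ring_1^'n)"
proof -
  have "(- mat 1) *v x = - (mat 1 *v x)" by (simp add: vec_eq_iff matrix_vector_mult_def sum_negf)
  then show ?thesis by (simp add: mat1_mv)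
qed

lemma eig_minus:
  fixes A :: "complex^'n^'n"
  assumes sq: "A ** A = mat 1" and ne: "A \<noteq> mat 1"
  shows "\<exists>w. w \<noteq> 0 \<and> A *v w = - w"
proof -
  obtain x where x: "A *v x \<noteq> x" using ne matrix_eq[of A "mat 1"] by (auto simp: mat1_mv)
  define w where "w = x - A *v x"
  have "A *v w = A *v x - (A ** A) *v x"
    by (simp add: w_def matrix_vector_mult_diff_distrib matrix_vector_mul_assoc)
  also have "\<dots> = - w" by (simp add: sq mat1_mv w_def)
  finally show ?thesis using x by (intro exI[of _ w]) (auto simp: w_def)
qed

lemma eig_plus:
  fixes A :: "complex^'n^'n"
  assumes sq: "A ** A = mat 1" and ne: "A \<noteq> - mat 1"
  shows "\<exists>w. w \<noteq> 0 \<and> A *v w = w"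
proof -
  obtain x where x: "A *v x \<noteq> - x" using ne matrix_eq[of A "- mat 1"] by (auto simp: neg_mat1_mv)
  define w where "w = x + A *v x"
  have "A *v w = A *v x + (A ** A) *v x"
    by (simp add: w_def matrix_vector_right_distrib matrix_vector_mul_assoc)
  also have "\<dots> = w" by (simp add: sq mat1_mv w_def)
  finally show ?thesis using x
    by (intro exI[of _ w]) (auto simp: w_def eq_neg_iff_add_eq_0 add.commute)
qed

definition outer :: "complex^'n \<Rightarrow> complex^'n^'n" where
  "outer w = (\<chi> i j. w$i * cnj (w$j))"

lemma outer_herm: "hermitian (outer w)"
  by (simp add: hermitian_def adj_def outer_def vec_eq_iff mult.commute)

lemma outer_curv:
  fixes A :: "complex^'n^'n"
  assumes herm: "hermitian A" and ev: "A *v w = of_real lam *s w" and w: "w \<noteq> 0"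
  shows "\<exists>r>0. Re (trace (outer w ** (outer w ** A))) = lam * r"
proof -
  define c where "c = (\<Sum>k\<in>UNIV. cnj (w$k) * w$k)"
  define r where "r = (\<Sum>k\<in>UNIV. (cmod (w$k))^2)"
  have e: "cnj z * z = complex_of_real ((cmod z)^2)" for z
    by (simp add: complex_eq_iff) (simp add: cmod_power2, simp add: power2_eq_square)
  have cr: "c = of_real r"
    by (simp only: c_def r_def e of_real_sum)
  have rpos: "r > 0"
  proof -
    obtain k where "w$k \<noteq> 0" using w by (auto simp: vec_eq_iff)
    then have "0 < (cmod (w$k))^2" by simp
    also have "\<dots> \<le> r" unfolding r_def
      by (rule member_le_sum) auto
    finally show ?thesis .
  qed
  have Acol: "(\<Sum>k\<in>UNIV. cnj (w$k) * A$k$j) = of_real lam * cnj (w$j)" for j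
  proof -
    have hA: "adj A = A" using herm by (simp add: hermitian_def)
    have akj: "A$k$j = cnj (A$j$k)" for k
    proof -
      have "adj A $ k $ j = cnj (A $ j $ k)" by (simp add: adj_def)
      then show ?thesis by (simp only: hA)
    qed
    have "cnj (\<Sum>k\<in>UNIV. A$j$k * w$k) = (\<Sum>k\<in>UNIV. cnj (A$j$k) * cnj (w$k))"
      by (simp add: cnj_sum)
    also have "\<dots> = (\<Sum>k\<in>UNIV. cnj (w$k) * A$k$j)"
      by (rule sum.cong) (simp_all add: akj mult.commute)
    finally have "(\<Sum>k\<in>UNIV. cnj (w$k) * A$k$j) = cnj (\<Sum>k\<in>UNIV. A$j$k * w$k)" by simp
    also have "(\<Sum>k\<in>UNIV. A$j$k * w$k) = (A *v w) $ j" by (simp add: matrix_vector_mult_def)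
    also have "\<dots> = of_real lam * w$j" using ev by simp
    finally show ?thesis by simp
  qed
  have OA: "outer w ** A = cscale (of_real lam) (outer w)"
  proof -
    have "(\<Sum>k\<in>UNIV. w$i * cnj (w$k) * A$k$j) = of_real lam * (w$i * cnj (w$j))" for i j
    proof -
      have "(\<Sum>k\<in>UNIV. w$i * cnj (w$k) * A$k$j) = w$i * (\<Sum>k\<in>UNIV. cnj (w$k) * A$k$j)"
        by (simp add: sum_distrib_left mult.assoc)
      also have "\<dots> = w$i * (of_real lam * cnj (w$j))" by (simp only: Acol)
      finally show ?thesis by (simp only: mult_ac)
    qed
    then show ?thesis by (simp add: outer_def cscale_def matrix_matrix_mult_def vec_eq_iff)
  qed
  have OO: "outer w ** outer w = cscale c (outer w)"
  proof -
    have "(\<Sum>k\<in>UNIV. w$i * cnj (w$k) * (w$k * cnj (w$j))) = c * (w$i * cnj (w$j))" for i j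
    proof -
      have "c * (w$i * cnj (w$j)) = (\<Sum>k\<in>UNIV. cnj (w$k) * w$k * (w$i * cnj (w$j)))"
        by (simp add: c_def sum_distrib_right)
      also have "\<dots> = (\<Sum>k\<in>UNIV. w$i * cnj (w$k) * (w$k * cnj (w$j)))"
        by (rule sum.cong) (simp_all add: mult_ac)
      finally show ?thesis by simp
    qed
    then show ?thesis by (simp add: outer_def cscale_def matrix_matrix_mult_def vec_eq_iff)
  qed
  have tO: "trace (outer w) = c"
    by (simp add: trace_def outer_def c_def mult.commute)
  have "trace (outer w ** (outer w ** A)) = of_real lam * (c * c)"
    by (simp add: OA cscale_mult_right OO trace_cscale tO)
  then have "Re (trace (outer w ** (outer w ** A))) = lam * (r * r)"
    by (simp add: cr)
  then show ?thesis using rpos by (intro exI[of _ "r * r"]) auto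
qed


definition Mv :: "('p \<Rightarrow> real^'p \<Rightarrow> complex^'n^'n) \<Rightarrow> real^'p \<Rightarrow> real^'p \<Rightarrow> complex^'n^'n" where
  "Mv \<mu> \<theta> v = (\<Sum>a\<in>UNIV. v $ a *\<^sub>R \<mu> a \<theta>)"

locale qset =
  fixes U :: "real^'p \<Rightarrow> complex^'n^'n"
    and \<mu> :: "'p \<Rightarrow> real^'p \<Rightarrow> complex^'n^'n"
    and W :: "complex^'n^'n"
  assumes U_unitary: "\<And>\<theta>. unitary (U \<theta>)"
    and U_cont: "continuous_on UNIV U"
    and U_deriv: "\<And>a \<theta>. has_partial U a \<theta> (cscale (- \<i>) (U \<theta> ** \<mu> a \<theta>))"
    and \<mu>_herm: "\<And>a \<theta>. hermitian (\<mu> a \<theta>)"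
    and \<mu>_C1: "\<And>a. Ck 1 (\<mu> a)"
    and W_unitary: "unitary W"
    and surj: "\<And>\<theta>. span (range (\<lambda>a. \<mu> a \<theta>)) = {H. hermitian H}"
begin

definition X where "X \<theta> = adj (U \<theta>) ** W"
definition L where "L \<theta> = frob_sq (U \<theta> - W)"
definition \<nu> where "\<nu> a b = (SOME g. (\<forall>x. has_partial (\<mu> a) b x (g x)) \<and> continuous_on UNIV g)"

lemma \<mu>_cont: "continuous_on UNIV (\<mu> a)"
  using \<mu>_C1[of a] by (simp add: One_nat_def)

lemma \<nu>: "has_partial (\<mu> a) b x (\<nu> a b x)" "continuous_on UNIV (\<nu> a b)"
proof -
  have "\<exists>g. (\<forall>x. has_partial (\<mu> a) b x (g x)) \<and> continuous_on UNIV g"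
    using \<mu>_C1[of a] by (simp add: One_nat_def)
  then have "(\<forall>x. has_partial (\<mu> a) b x (\<nu> a b x)) \<and> continuous_on UNIV (\<nu> a b)"
    unfolding \<nu>_def by (rule someI_ex)
  then show "has_partial (\<mu> a) b x (\<nu> a b x)" "continuous_on UNIV (\<nu> a b)" by auto
qed

lemma \<nu>_herm: "hermitian (\<nu> a b x)"
proof -
  have d1: "((\<lambda>t. \<mu> a (x + t *\<^sub>R axis b 1)) has_vector_derivative \<nu> a b x) (at 0)"
    using \<nu>(1) unfolding has_partial_def .
  have "((\<lambda>t. adj (\<mu> a (x + t *\<^sub>R axis b 1))) has_vector_derivative adj (\<nu> a b x)) (at 0)"
    by (rule bounded_linear.has_vector_derivative[OF bounded_linear_adj d1])
  moreover have "adj (\<mu> a y) = \<mu> a y" for y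
    using \<mu>_herm[of a y] unfolding hermitian_def .
  ultimately have d2: "((\<lambda>t. \<mu> a (x + t *\<^sub>R axis b 1)) has_vector_derivative adj (\<nu> a b x)) (at 0)"
    by simp
  have "\<nu> a b x = adj (\<nu> a b x)"
    by (rule vector_derivative_unique_at[OF d1 d2])
  then show ?thesis unfolding hermitian_def by simp
qed

lemma U_fderiv: "(U has_derivative (\<lambda>h. cscale (- \<i>) (U \<theta> ** Mv \<mu> \<theta> h))) (at \<theta>)"
proof -
  have c: "continuous_on UNIV (\<lambda>\<theta>. cscale (- \<i>) (U \<theta> ** \<mu> a \<theta>))" for a
    by (rule bounded_linear.continuous_on[OF bounded_linear_cscale]
          bounded_bilinear.continuous_on[OF bounded_bilinear_mmult U_cont \<mu>_cont])+
  have "(U has_derivative (\<lambda>h. \<Sum>a\<in>UNIV. h$a *\<^sub>R cscale (- \<i>) (U \<theta> ** \<mu> a \<theta>))) (at \<theta>)"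
    by (rule partials_fderiv[OF U_deriv c])
  moreover have "(\<Sum>a\<in>UNIV. h$a *\<^sub>R cscale (- \<i>) (U \<theta> ** \<mu> a \<theta>)) = cscale (- \<i>) (U \<theta> ** Mv \<mu> \<theta> h)" for h
    by (simp add: Mv_def linear_sum[OF linear_cscale] cscale_scaleR
          bounded_bilinear.sum_right[OF bounded_bilinear_mmult] scaleR_mult_right)
  ultimately show ?thesis by simp
qed

definition Nv where "Nv \<theta> v h = (\<Sum>a\<in>UNIV. v $ a *\<^sub>R (\<Sum>b\<in>UNIV. h $ b *\<^sub>R \<nu> a b \<theta>))"

lemma Nv_herm: "hermitian (Nv \<theta> v h)"
  unfolding Nv_def
  by (intro hermitian_sum hermitian_scaleR \<nu>_herm) auto

lemma Mv_herm: "hermitian (Mv \<mu> \<theta> v)"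
  unfolding Mv_def
  by (intro hermitian_sum hermitian_scaleR \<mu>_herm) auto

lemma Mv_fderiv: "((\<lambda>\<theta>. Mv \<mu> \<theta> v) has_derivative (\<lambda>h. Nv \<theta> v h)) (at \<theta>)"
proof -
  have "(\<mu> a has_derivative (\<lambda>h. \<Sum>b\<in>UNIV. h $ b *\<^sub>R \<nu> a b \<theta>)) (at \<theta>)" for a
    by (rule partials_fderiv[OF \<nu>])
  then show ?thesis
    unfolding Mv_def Nv_def
    by (auto intro!: derivative_eq_intros)
qed


lemma L_eq: "L \<theta> = 2 * real CARD('n) - 2 * Re (trace (adj (U \<theta>) ** W))"
  unfolding L_def using frob_sq_diff[OF U_unitary W_unitary] by simp

definition \<psi> where "\<psi> v \<theta> = Im (trace (Mv \<mu> \<theta> v ** X \<theta>))"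

lemma adjDU: "adj (cscale (- \<i>) (U y ** Mv \<mu> y h)) ** W = cscale \<i> (Mv \<mu> y h ** X y)"
proof -
  have "adj (Mv \<mu> y h) = Mv \<mu> y h" using Mv_herm unfolding hermitian_def .
  then show ?thesis
    by (simp add: adj_cscale adj_mult cscale_mult_left X_def matrix_mul_assoc)
qed

lemma U_line: "((\<lambda>s. U (\<theta> + s *\<^sub>R v)) has_vector_derivative
    cscale (- \<i>) (U (\<theta> + t *\<^sub>R v) ** Mv \<mu> (\<theta> + t *\<^sub>R v) v)) (at t)"
  by (rule line_vd[OF U_fderiv])

lemma X_line: "((\<lambda>s. X (\<theta> + s *\<^sub>R v)) has_vector_derivative
    cscale \<i> (Mv \<mu> (\<theta> + t *\<^sub>R v) v ** X (\<theta> + t *\<^sub>R v))) (at t)"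
proof -
  have bl: "bounded_linear (\<lambda>A::complex^'n^'n. adj A ** W)"
    by (rule bl_adjW)
  show ?thesis
    using bounded_linear.has_vector_derivative[OF bl U_line[of \<theta> v t]]
    unfolding X_def adjDU[unfolded X_def] .
qed

lemma L_line: "((\<lambda>s. L (\<theta> + s *\<^sub>R v)) has_real_derivative 2 * \<psi> v (\<theta> + t *\<^sub>R v)) (at t)"
proof -
  define y where "y = \<theta> + t *\<^sub>R v"
  have bl: "bounded_linear (\<lambda>A::complex^'n^'n. Re (trace (adj A ** W)))"
    using bounded_linear_compose[OF bounded_linear_Re bl_T[of W]] by (simp add: o_def)
  have "((\<lambda>s. Re (trace (adj (U (\<theta> + s *\<^sub>R v)) ** W))) has_vector_derivative
      Re (trace (adj (cscale (- \<i>) (U y ** Mv \<mu> y v)) ** W))) (at t)"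
    using bounded_linear.has_vector_derivative[OF bl U_line[of \<theta> v t]] unfolding y_def .
  also have "Re (trace (adj (cscale (- \<i>) (U y ** Mv \<mu> y v)) ** W)) = - \<psi> v y"
    unfolding adjDU \<psi>_def by (simp add: trace_cscale)
  finally have d: "((\<lambda>s. Re (trace (adj (U (\<theta> + s *\<^sub>R v)) ** W))) has_real_derivative - \<psi> v y) (at t)"
    by (simp add: has_real_derivative_iff_has_vector_derivative)
  have "((\<lambda>s. 2 * real CARD('n) - 2 * Re (trace (adj (U (\<theta> + s *\<^sub>R v)) ** W))) has_real_derivative
     0 - 2 * (- \<psi> v y)) (at t)"
    by (intro DERIV_diff DERIV_const DERIV_cmult d)
  then show ?thesis unfolding L_eq y_def by simp
qed

definition Q where "Q \<theta> v h = Re (trace (Mv \<mu> \<theta> v ** (Mv \<mu> \<theta> h ** X \<theta>)))"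

lemma psi_line:
  assumes herm: "hermitian (X \<theta>)"
  shows "((\<lambda>s. \<psi> v (\<theta> + s *\<^sub>R h)) has_real_derivative Q \<theta> v h) (at 0)"
proof -
  have m: "((\<lambda>s. Mv \<mu> (\<theta> + s *\<^sub>R h) v) has_vector_derivative Nv \<theta> v h) (at 0)"
  proof -
    have "((\<lambda>\<theta>. Mv \<mu> \<theta> v) has_derivative Nv \<theta> v) (at (\<theta> + 0 *\<^sub>R h))"
      using Mv_fderiv by simp
    from line_vd[OF this] show ?thesis by simp
  qed
  have x: "((\<lambda>s. X (\<theta> + s *\<^sub>R h)) has_vector_derivative cscale \<i> (Mv \<mu> \<theta> h ** X \<theta>)) (at 0)"
    using X_line[where \<theta>=\<theta> and v=h and t=0] by simp
  have p: "((\<lambda>s. Mv \<mu> (\<theta> + s *\<^sub>R h) v ** X (\<theta> + s *\<^sub>R h)) has_vector_derivative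
      (Mv \<mu> \<theta> v ** cscale \<i> (Mv \<mu> \<theta> h ** X \<theta>) + Nv \<theta> v h ** X \<theta>)) (at 0)"
    using bounded_bilinear.has_vector_derivative[OF bounded_bilinear_mmult m x] by simp
  have bl: "bounded_linear (\<lambda>A::complex^'n^'n. Im (trace A))"
    using bounded_linear_compose[OF bounded_linear_Im bounded_linear_trace] by (simp add: o_def)
  have "((\<lambda>s. \<psi> v (\<theta> + s *\<^sub>R h)) has_vector_derivative
      Im (trace (Mv \<mu> \<theta> v ** cscale \<i> (Mv \<mu> \<theta> h ** X \<theta>) + Nv \<theta> v h ** X \<theta>))) (at 0)"
    unfolding \<psi>_def by (rule bounded_linear.has_vector_derivative[OF bl p])
  also have "Im (trace (Mv \<mu> \<theta> v ** cscale \<i> (Mv \<mu> \<theta> h ** X \<theta>) + Nv \<theta> v h ** X \<theta>)) = Q \<theta> v h"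
    using trace_herm_real[OF Nv_herm herm, of \<theta> v h]
    by (simp add: trace_add cscale_mult_right trace_cscale Q_def)
  finally show ?thesis by (simp add: has_real_derivative_iff_has_vector_derivative)
qed


lemma Mv_axis: "Mv \<mu> \<theta> (axis b 1) = \<mu> b \<theta>"
  by (simp add: Mv_def axis_def if_distrib[of "\<lambda>r. r *\<^sub>R _"] cong: if_cong)

lemma L_partial: "has_partial L b y (2 * \<psi> (axis b 1) y)"
  using L_line[where \<theta>=y and v="axis b 1" and t=0]
  by (simp add: has_partial_def has_real_derivative_iff_has_vector_derivative)

lemma pderiv_L: "pderiv L b y = 2 * \<psi> (axis b 1) y"
  using L_partial[of b y] unfolding has_partial_def pderiv_def by (rule vector_derivative_at)

lemma crit_herm:
  assumes crit: "critical_point L \<theta>"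
  shows "hermitian (X \<theta>)"
proof -
  have z: "\<psi> (axis a 1) \<theta> = 0" for a
  proof -
    have "((\<lambda>t. L (\<theta> + t *\<^sub>R axis a 1)) has_vector_derivative 0) (at 0)"
      using crit unfolding critical_point_def has_partial_def by blast
    moreover have "((\<lambda>t. L (\<theta> + t *\<^sub>R axis a 1)) has_vector_derivative 2 * \<psi> (axis a 1) \<theta>) (at 0)"
      using L_partial[of a \<theta>] unfolding has_partial_def .
    ultimately show ?thesis using vector_derivative_unique_at by fastforce
  qed
  define f where "f H = Im (trace (H ** X \<theta>))" for H
  have lin: "linear f"
    unfolding f_def
    by (rule linearI) (simp_all add: mm_add_rdistrib trace_add scaleR_mult_left trace_scaleR)
  have f0: "f H = 0" if "hermitian H" for H
  proof -
    have "H \<in> span (range (\<lambda>a. \<mu> a \<theta>))" using surj that by blast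
    then show ?thesis
    proof (rule span_induct)
      show "subspace {H. f H = 0}"
        using lin by (auto simp: subspace_def linear_add linear_scale linear_0)
      show "\<And>x. x \<in> range (\<lambda>a. \<mu> a \<theta>) \<Longrightarrow> f x = 0"
        using z by (auto simp: f_def \<psi>_def Mv_axis)
    qed
  qed
  define A where "A = X \<theta>"
  define P where "P = cscale (1/2) (A + adj A)"
  define R where "R = cscale (- \<i> / 2) (A - adj A)"
  have hP: "hermitian P" unfolding P_def hermitian_def
    by (simp add: adj_cscale adj_add add.commute)
  have hR: "hermitian R" unfolding R_def hermitian_def
    by (simp add: adj_def cscale_def vec_eq_iff field_simps)
  have AR: "A = P + cscale \<i> R"
    by (simp add: P_def R_def cscale_def vec_eq_iff field_simps)
  have "f R = 0" by (rule f0[OF hR])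
  then have "Im (trace (R ** P)) + Re (trace (R ** R)) = 0"
    by (simp add: f_def A_def[symmetric] AR matrix_add_ldistrib trace_add cscale_mult_right trace_cscale)
  then have "Re (trace (adj R ** R)) = 0"
    using trace_herm_real[OF hR hP] hR by (simp add: hermitian_def)
  then have "R = 0" using frob_sq_zero_iff[of R] by (simp add: frob_sq_def)
  then have "A - adj A = 0"
    unfolding R_def by (simp add: cscale_def vec_eq_iff)
  then show ?thesis unfolding hermitian_def A_def by simp
qed


lemma hess_entry:
  assumes herm: "hermitian (X \<theta>)"
  shows "hessian L \<theta> $ a $ b = 2 * Q \<theta> (axis b 1) (axis a 1)"
proof -
  have e: "pderiv L b = (\<lambda>y. 2 * \<psi> (axis b 1) y)"
    by (rule ext) (simp add: pderiv_L)
  have "((\<lambda>t. 2 * \<psi> (axis b 1) (\<theta> + t *\<^sub>R axis a 1)) has_real_derivative 2 * Q \<theta> (axis b 1) (axis a 1)) (at 0)"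
    by (intro DERIV_cmult psi_line herm)
  then have "pderiv (\<lambda>y. 2 * \<psi> (axis b 1) y) a \<theta> = 2 * Q \<theta> (axis b 1) (axis a 1)"
    unfolding pderiv_def has_real_derivative_iff_has_vector_derivative by (rule vector_derivative_at)
  then show ?thesis by (simp add: hessian_def e)
qed

lemma mm_sum_left: "sum f S ** (B::complex^'n^'n) = (\<Sum>i\<in>S. f i ** B)"
  by (rule bounded_bilinear.sum_left[OF bounded_bilinear_mmult])

lemma mm_sum_right: "(B::complex^'n^'n) ** sum f S = (\<Sum>i\<in>S. B ** f i)"
  by (rule bounded_bilinear.sum_right[OF bounded_bilinear_mmult])

lemma Q_expand: "Q \<theta> v h = (\<Sum>b\<in>UNIV. \<Sum>a\<in>UNIV. v$b * h$a * Q \<theta> (axis b 1) (axis a 1))"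
  unfolding Q_def Mv_axis
  by (simp add: Mv_def mm_sum_left mm_sum_right scaleR_mult_left scaleR_mult_right trace_sum trace_scaleR
      Re_sum sum_distrib_left mult.assoc) (subst sum.swap, simp add: mult_ac)

lemma quad:
  assumes herm: "hermitian (X \<theta>)"
  shows "v \<bullet> (hessian L \<theta> *v v) = 2 * Q \<theta> v v"
proof -
  have "v \<bullet> (hessian L \<theta> *v v) = (\<Sum>a\<in>UNIV. v$a * (\<Sum>b\<in>UNIV. 2 * Q \<theta> (axis b 1) (axis a 1) * v$b))"
    by (simp add: inner_vec_def matrix_vector_mult_def hess_entry[OF herm])
  also have "\<dots> = 2 * (\<Sum>a\<in>UNIV. \<Sum>b\<in>UNIV. v$b * v$a * Q \<theta> (axis b 1) (axis a 1))"
    by (simp add: sum_distrib_left mult_ac)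
  also have "\<dots> = 2 * Q \<theta> v v"
    by (subst Q_expand, subst sum.swap) simp
  finally show ?thesis .
qed

lemma hess_sym:
  assumes herm: "hermitian (X \<theta>)"
  shows "hessian L \<theta> $ a $ b = hessian L \<theta> $ b $ a"
  unfolding hess_entry[OF herm] Q_def Mv_axis
  using trace_herm3[OF \<mu>_herm \<mu>_herm herm] by simp


lemma X_unitary: "unitary (X \<theta>)"
  unfolding X_def by (intro unitary_mult unitary_adj U_unitary W_unitary)

lemma X_sq: "hermitian (X \<theta>) \<Longrightarrow> X \<theta> ** X \<theta> = mat 1"
proof -
  assume h: "hermitian (X \<theta>)"
  have "adj (X \<theta>) ** X \<theta> = mat 1" using X_unitary[of \<theta>] unfolding unitary_def by (rule conjunct1)
  moreover have "adj (X \<theta>) = X \<theta>" using h unfolding hermitian_def .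
  ultimately show ?thesis by simp
qed

lemma curv_dir:
  assumes herm: "hermitian (X \<theta>)" and ev: "X \<theta> *v w = of_real lam *s w" and w: "w \<noteq> 0"
  shows "\<exists>v r. r > 0 \<and> Q \<theta> v v = lam * r"
proof -
  have "outer w \<in> {H. hermitian H}" using outer_herm by simp
  then have "outer w \<in> span (range (\<lambda>a. \<mu> a \<theta>))" by (simp only: surj)
  from span_coeffs[OF this] obtain v where v: "outer w = Mv \<mu> \<theta> v"
    unfolding Mv_def by (elim exE)
  obtain r where r: "r > 0" "Re (trace (outer w ** (outer w ** X \<theta>))) = lam * r"
    using outer_curv[OF herm ev w] by (elim exE conjE)
  have "Q \<theta> v v = lam * r" unfolding Q_def v[symmetric] by (rule r(2))
  then show ?thesis using r(1) by (intro exI conjI)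
qed

lemma psi0: "hermitian (X \<theta>) \<Longrightarrow> \<psi> v \<theta> = 0"
  unfolding \<psi>_def by (rule trace_herm_real[OF Mv_herm])

lemma not_max:
  assumes herm: "hermitian (X \<theta>)" and Qp: "Q \<theta> v v > 0"
  shows "\<not> local_max L \<theta>"
proof
  assume "local_max L \<theta>"
  then obtain e where e: "e > 0" and mx: "\<And>y. dist y \<theta> < e \<Longrightarrow> L y \<le> L \<theta>"
    unfolding local_max_def by blast
  define d where "d = e / (norm v + 1)"
  have nv1: "norm v + 1 > 0" using norm_ge_zero[of v] by linarith
  have d: "d > 0" unfolding d_def using e nv1 by (rule divide_pos_pos)
  obtain t where t: "0 < t" "t < d" and lt: "L (\<theta> + 0 *\<^sub>R v) < L (\<theta> + t *\<^sub>R v)"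
    using incr_from_second[of "\<lambda>s. L (\<theta> + s *\<^sub>R v)" "\<lambda>s. 2 * \<psi> v (\<theta> + s *\<^sub>R v)" "2 * Q \<theta> v v" d]
      L_line psi0[OF herm] DERIV_cmult[OF psi_line[OF herm, of v v], of 2] Qp d
    by auto
  have "dist (\<theta> + t *\<^sub>R v) \<theta> = t * norm v" using t by (simp add: dist_norm)
  also have "\<dots> < e"
  proof -
    have "t * norm v \<le> d * norm v" using t by (simp add: mult_right_mono)
    also have "\<dots> < e"
    proof -
      have r: "norm v / (norm v + 1) < 1" using nv1 by (simp add: divide_less_eq)
      have "d * norm v = e * (norm v / (norm v + 1))" by (simp add: d_def)
      then show ?thesis using mult_strict_left_mono[OF r e] by simp
    qed
    finally show ?thesis .
  qed
  finally have "L (\<theta> + t *\<^sub>R v) \<le> L \<theta>" by (rule mx)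
  then show False using lt by simp
qed

lemma not_min:
  assumes herm: "hermitian (X \<theta>)" and Qn: "Q \<theta> v v < 0"
  shows "\<not> local_min L \<theta>"
proof
  assume "local_min L \<theta>"
  then obtain e where e: "e > 0" and mn: "\<And>y. dist y \<theta> < e \<Longrightarrow> L \<theta> \<le> L y"
    unfolding local_min_def by blast
  define d where "d = e / (norm v + 1)"
  have nv1: "norm v + 1 > 0" using norm_ge_zero[of v] by linarith
  have d: "d > 0" unfolding d_def using e nv1 by (rule divide_pos_pos)
  have D1: "((\<lambda>s. - L (\<theta> + s *\<^sub>R v)) has_real_derivative - (2 * \<psi> v (\<theta> + t *\<^sub>R v))) (at t)" for t
    by (intro DERIV_minus L_line)
  have D2: "((\<lambda>s. - (2 * \<psi> v (\<theta> + s *\<^sub>R v))) has_real_derivative - (2 * Q \<theta> v v)) (at 0)"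
    by (intro DERIV_minus DERIV_cmult psi_line herm)
  obtain t where t: "0 < t" "t < d" and lt: "- L (\<theta> + 0 *\<^sub>R v) < - L (\<theta> + t *\<^sub>R v)"
    using incr_from_second[of "\<lambda>s. - L (\<theta> + s *\<^sub>R v)" "\<lambda>s. - (2 * \<psi> v (\<theta> + s *\<^sub>R v))" "- (2 * Q \<theta> v v)" d]
      D1 D2 psi0[OF herm] Qn d
    by auto
  have "dist (\<theta> + t *\<^sub>R v) \<theta> = t * norm v" using t by (simp add: dist_norm)
  also have "\<dots> < e"
  proof -
    have "t * norm v \<le> d * norm v" using t by (simp add: mult_right_mono)
    also have "\<dots> < e"
    proof -
      have r: "norm v / (norm v + 1) < 1" using nv1 by (simp add: divide_less_eq)
      have "d * norm v = e * (norm v / (norm v + 1))" by (simp add: d_def)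
      then show ?thesis using mult_strict_left_mono[OF r e] by simp
    qed
    finally show ?thesis .
  qed
  finally have "L \<theta> \<le> L (\<theta> + t *\<^sub>R v)" by (rule mn)
  then show False using lt by simp
qed

lemma local_min_crit:
  assumes "local_min L \<theta>"
  shows "critical_point L \<theta>"
  unfolding critical_point_def
proof
  fix a
  obtain e where e: "e > 0" and mn: "\<And>y. dist y \<theta> < e \<Longrightarrow> L \<theta> \<le> L y"
    using assms unfolding local_min_def by blast
  have d: "((\<lambda>t. L (\<theta> + t *\<^sub>R axis a 1)) has_real_derivative 2 * \<psi> (axis a 1) \<theta>) (at 0)"
    using L_partial[of a \<theta>] unfolding has_partial_def has_real_derivative_iff_has_vector_derivative .
  have "\<forall>y. \<bar>0 - y\<bar> < e \<longrightarrow> L (\<theta> + 0 *\<^sub>R axis a 1) \<le> L (\<theta> + y *\<^sub>R axis a 1)"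
    using mn by (auto simp: dist_norm)
  then have "2 * \<psi> (axis a 1) \<theta> = 0" using DERIV_local_min[OF d e] by blast
  then show "has_partial L a \<theta> 0" using L_partial[of a \<theta>] by simp
qed

end


lemma mm_uminus_left: "(- A) ** (B::complex^'n^'m) = - (A ** B)"
  by (simp add: vec_eq_iff matrix_matrix_mult_def sum_negf)

lemma mm_uminus_right: "(A::complex^'n^'m) ** (- B) = - (A ** B)"
  by (simp add: vec_eq_iff matrix_matrix_mult_def sum_negf)

lemma trace_uminus: "trace (- (A::complex^'n^'n)) = - trace A"
  by (simp add: trace_def sum_negf)

context qset begin

lemma UX: "U \<theta> ** X \<theta> = W"
proof -
  have "U \<theta> ** adj (U \<theta>) = mat 1" using U_unitary[of \<theta>] unfolding unitary_def by (rule conjunct2)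
  then show ?thesis unfolding X_def by (simp add: matrix_mul_assoc)
qed

lemma X1: "X \<theta> = mat 1 \<Longrightarrow> U \<theta> = W"
  using UX[of \<theta>] by simp

lemma Xm1: "X \<theta> = - mat 1 \<Longrightarrow> U \<theta> = - W"
  using UX[of \<theta>] by (simp add: mm_uminus_right minus_equation_iff)

lemma L_nonneg: "L \<theta> \<ge> 0"
  unfolding L_def by (rule frob_sq_nonneg)

lemma L_le: "L \<theta> \<le> 4 * real CARD('n)"
proof -
  have "frob_sq (U \<theta> - (- W)) \<ge> 0" by (rule frob_sq_nonneg)
  then have "0 \<le> 2 * real CARD('n) + 2 * Re (trace (adj (U \<theta>) ** W))"
    using frob_sq_diff[OF U_unitary unitary_uminus[OF W_unitary], of \<theta>]
    by (simp add: mm_uminus_right trace_def sum_negf)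
  then show ?thesis unfolding L_eq by simp
qed

lemma Q_herm_sq: "Q \<theta> v v = Re (trace (Mv \<mu> \<theta> v ** (Mv \<mu> \<theta> v ** X \<theta>)))"
  by (simp add: Q_def)

lemma frob_M: "Re (trace (Mv \<mu> \<theta> v ** Mv \<mu> \<theta> v)) = frob_sq (Mv \<mu> \<theta> v)"
proof -
  have "adj (Mv \<mu> \<theta> v) = Mv \<mu> \<theta> v" using Mv_herm unfolding hermitian_def .
  then show ?thesis unfolding frob_sq_def by simp
qed

end

theorem mainTheorem7:
  fixes N :: nat
    and U :: "real^'p \<Rightarrow> complex^'n^'n"
    and \<mu> :: "'p \<Rightarrow> real^'p \<Rightarrow> complex^'n^'n"
    and W :: "complex^'n^'n"
    and \<theta>s :: "real^'p"
  assumes d: "CARD('n) = 2 ^ N"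
    and U_unitary: "\<And>\<theta>. unitary (U \<theta>)"
    and U_smooth: "smooth U"
    and U_deriv: "\<And>a \<theta>. has_partial U a \<theta> (cscale (- \<i>) (U \<theta> ** \<mu> a \<theta>))"
    and \<mu>_herm: "\<And>a \<theta>. hermitian (\<mu> a \<theta>)"
    and \<mu>_smooth: "\<And>a. smooth (\<mu> a)"
    and W_unitary: "unitary W"
    and surj: "\<And>\<theta>. span (range (\<lambda>a. \<mu> a \<theta>)) = {H. hermitian H}"
    and crit: "critical_point (\<lambda>\<theta>. frob_sq (U \<theta> - W)) \<theta>s"
  shows "let L = (\<lambda>\<theta>. frob_sq (U \<theta> - W)); X = adj (U \<theta>s) ** W in
     hermitian X \<and> unitary X \<and>
     (U \<theta>s = W \<longrightarrow> pos_semidef (hessian L \<theta>s) \<and> L \<theta>s = 0 \<and> (\<forall>\<theta>. L \<theta>s \<le> L \<theta>)) \<and>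
     (U \<theta>s = - W \<longrightarrow> neg_semidef (hessian L \<theta>s) \<and> (\<forall>\<theta>. L \<theta> \<le> L \<theta>s)) \<and>
     (U \<theta>s \<noteq> W \<and> U \<theta>s \<noteq> - W \<longrightarrow>
        is_eigenvalue X 1 \<and> is_eigenvalue X (-1) \<and>
        (\<exists>l>0. is_eigenvalue (hessian L \<theta>s) l) \<and>
        (\<exists>l<0. is_eigenvalue (hessian L \<theta>s) l) \<and>
        saddle_point L \<theta>s) \<and>
     (\<forall>\<theta>. local_min L \<theta> \<longrightarrow> (\<forall>\<theta>'. L \<theta> \<le> L \<theta>'))"
proof -
  have Ucont: "continuous_on UNIV U"
    using U_smooth unfolding smooth_def by (metis Ck.simps(1))
  have muC1: "Ck 1 (\<mu> a)" for a
    using \<mu>_smooth[of a] unfolding smooth_def by blast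
  interpret q: qset U \<mu> W
    by (unfold_locales) (fact U_unitary Ucont U_deriv \<mu>_herm muC1 W_unitary surj)+
  have Leq: "(\<lambda>\<theta>. frob_sq (U \<theta> - W)) = q.L" by (rule ext) (simp add: q.L_def)
  have Xeq: "adj (U \<theta>s) ** W = q.X \<theta>s" by (simp add: q.X_def)
  have critq: "critical_point q.L \<theta>s" using crit unfolding Leq .
  have herm: "hermitian (q.X \<theta>s)" by (rule q.crit_herm[OF critq])
  have sym: "\<And>a b. hessian q.L \<theta>s $ a $ b = hessian q.L \<theta>s $ b $ a"
    by (rule q.hess_sym[OF herm])
  have P1: "U \<theta>s = W \<longrightarrow> pos_semidef (hessian q.L \<theta>s) \<and> q.L \<theta>s = 0 \<and> (\<forall>\<theta>. q.L \<theta>s \<le> q.L \<theta>)"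
  proof
    assume UW: "U \<theta>s = W"
    then have X1: "q.X \<theta>s = mat 1"
      using W_unitary by (simp add: q.X_def unitary_def)
    have "pos_semidef (hessian q.L \<theta>s)"
      unfolding pos_semidef_def
    proof
      fix v
      show "0 \<le> v \<bullet> (hessian q.L \<theta>s *v v)"
        unfolding q.quad[OF herm] q.Q_def X1 using q.frob_M[of \<theta>s v] frob_sq_nonneg[of "Mv \<mu> \<theta>s v"]
        by simp
    qed
    moreover have "q.L \<theta>s = 0" using UW by (simp add: q.L_def frob_sq_def trace_def matrix_matrix_mult_def)
    ultimately show "pos_semidef (hessian q.L \<theta>s) \<and> q.L \<theta>s = 0 \<and> (\<forall>\<theta>. q.L \<theta>s \<le> q.L \<theta>)"
      using q.L_nonneg by simp
  qed
  have P2: "U \<theta>s = - W \<longrightarrow> neg_semidef (hessian q.L \<theta>s) \<and> (\<forall>\<theta>. q.L \<theta> \<le> q.L \<theta>s)"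
  proof
    assume UW: "U \<theta>s = - W"
    then have Xm: "q.X \<theta>s = - mat 1"
      using W_unitary by (simp add: q.X_def unitary_def adj_uminus mm_uminus_left)
    have "neg_semidef (hessian q.L \<theta>s)"
      unfolding neg_semidef_def
    proof
      fix v
      show "v \<bullet> (hessian q.L \<theta>s *v v) \<le> 0"
        unfolding q.quad[OF herm] q.Q_def Xm using q.frob_M[of \<theta>s v] frob_sq_nonneg[of "Mv \<mu> \<theta>s v"]
        by (simp add: mm_uminus_right trace_def sum_negf)
    qed
    moreover have "q.L \<theta>s = 4 * real CARD('n)"
    proof -
      have "q.L \<theta>s = frob_sq (- W - W)" using UW by (simp add: q.L_def)
      also have "\<dots> = 2 * real CARD('n) - 2 * Re (trace (adj (- W) ** W))"
        using frob_sq_diff[OF unitary_uminus[OF W_unitary] W_unitary] by simp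
      also have "\<dots> = 4 * real CARD('n)"
        using W_unitary by (simp add: adj_uminus mm_uminus_left unitary_def trace_uminus trace_mat1)
      finally show ?thesis .
    qed
    ultimately show "neg_semidef (hessian q.L \<theta>s) \<and> (\<forall>\<theta>. q.L \<theta> \<le> q.L \<theta>s)"
      using q.L_le by simp
  qed
  have P3: "U \<theta>s \<noteq> W \<and> U \<theta>s \<noteq> - W \<longrightarrow>
        is_eigenvalue (q.X \<theta>s) 1 \<and> is_eigenvalue (q.X \<theta>s) (-1) \<and>
        (\<exists>l>0. is_eigenvalue (hessian q.L \<theta>s) l) \<and>
        (\<exists>l<0. is_eigenvalue (hessian q.L \<theta>s) l) \<and>
        saddle_point q.L \<theta>s"
  proof
    assume ne: "U \<theta>s \<noteq> W \<and> U \<theta>s \<noteq> - W"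
    have n1: "q.X \<theta>s \<noteq> mat 1" using ne q.X1 by blast
    have n2: "q.X \<theta>s \<noteq> - mat 1" using ne q.Xm1 by blast
    obtain wp where wp: "wp \<noteq> 0" "q.X \<theta>s *v wp = wp"
      using eig_plus[OF q.X_sq[OF herm] n2] by blast
    obtain wm where wm: "wm \<noteq> 0" "q.X \<theta>s *v wm = - wm"
      using eig_minus[OF q.X_sq[OF herm] n1] by blast
    have e1: "is_eigenvalue (q.X \<theta>s) 1" unfolding is_eigenvalue_def using wp by auto
    have e2: "is_eigenvalue (q.X \<theta>s) (-1)" unfolding is_eigenvalue_def using wm
      by (intro exI[of _ wm]) (simp add: vec_eq_iff)
    obtain vp rp where vp: "rp > 0" "q.Q \<theta>s vp vp = 1 * rp"
      using q.curv_dir[OF herm, of wp 1] wp by auto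
    obtain vm rm where vm: "rm > 0" "q.Q \<theta>s vm vm = (-1) * rm"
      using q.curv_dir[OF herm, of wm "-1"] wm by (auto simp: vec_eq_iff)
    have Qp: "q.Q \<theta>s vp vp > 0" using vp by simp
    have Qm: "q.Q \<theta>s vm vm < 0" using vm by simp
    have "\<exists>l>0. is_eigenvalue (hessian q.L \<theta>s) l"
      by (rule pos_eig[OF sym, of vp]) (simp add: q.quad[OF herm] Qp)
    moreover have "\<exists>l<0. is_eigenvalue (hessian q.L \<theta>s) l"
      by (rule neg_eig[OF sym, of vm]) (simp add: q.quad[OF herm] Qm)
    moreover have "saddle_point q.L \<theta>s"
      unfolding saddle_point_def using critq q.not_min[OF herm Qm] q.not_max[OF herm Qp] by blast
    ultimately show "is_eigenvalue (q.X \<theta>s) 1 \<and> is_eigenvalue (q.X \<theta>s) (-1) \<and>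
        (\<exists>l>0. is_eigenvalue (hessian q.L \<theta>s) l) \<and>
        (\<exists>l<0. is_eigenvalue (hessian q.L \<theta>s) l) \<and>
        saddle_point q.L \<theta>s" using e1 e2 by blast
  qed
  have P4: "\<forall>\<theta>. local_min q.L \<theta> \<longrightarrow> (\<forall>\<theta>'. q.L \<theta> \<le> q.L \<theta>')"
  proof (intro allI impI)
    fix \<theta> \<theta>' assume lm: "local_min q.L \<theta>"
    have h: "hermitian (q.X \<theta>)" by (rule q.crit_herm[OF q.local_min_crit[OF lm]])
    show "q.L \<theta> \<le> q.L \<theta>'"
    proof (cases "q.X \<theta> = mat 1")
      case True
      then have "q.L \<theta> = 0" using q.X1 by (simp add: q.L_def frob_sq_def trace_def matrix_matrix_mult_def)
      then show ?thesis using q.L_nonneg by simp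
    next
      case False
      obtain wm where wm: "wm \<noteq> 0" "q.X \<theta> *v wm = - wm"
        using eig_minus[OF q.X_sq[OF h] False] by blast
      obtain vm rm where vm: "rm > 0" "q.Q \<theta> vm vm = (-1) * rm"
        using q.curv_dir[OF h, of wm "-1"] wm by (auto simp: vec_eq_iff)
      then have "q.Q \<theta> vm vm < 0" by simp
      then show ?thesis using q.not_min[OF h] lm by blast
    qed
  qed
  show ?thesis
    unfolding Let_def Leq Xeq
    using herm q.X_unitary P1 P2 P3 P4 by blast
qed


end
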